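(* Let $\varphi:\mathbb{D}\to\mathbb{D}$ be holomorphic and $m\in\mathrm{Hol}(\mathbb{D})$. If the weighted composition operator $W_{m,\varphi}$, $W_{m,\varphi}f=m\,(f\circ\varphi)$, is similar to a linear isometry of $\mathrm{Hol}(\mathbb{D})$, then $W_{m,\varphi}$ is invertible.
   Context: $\mathbb{D}$ is the open unit disc and $\mathrm{Hol}(\mathbb{D})$ the Fréchet space of holomorphic functions on $\mathbb{D}$ with seminorms $\|f\|_{\infty,1-1/p}=\sup_{|z|\le 1-1/p}|f(z)|$, $p\in\mathbb{N}$, and metric $d(f,g)=\sum_{p\ge1}2^{-p}\min(1,\|f-g\|_{\infty,1-1/p})$. A linear isometry of $\mathrm{Hol}(\mathbb{D})$ is a linear operator that is an isometry for $d$. Two operators $T,V$ in the space $\mathcal{L}(\mathrm{Hol}(\mathbb{D}))$ of continuous linear operators are similar if there is an invertible $U\in\mathcal{L}(\mathrm{Hol}(\mathbb{D}))$ with $U^{-1}TU=V$. *)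

theory Defs
  imports "HOL-Analysis.Analysis"
begin

text \<open>Hol(D) is represented by canonical representatives: functions holomorphic on
  the open unit disc and equal to 0 outside of it.\<close>

definition Hol :: "(complex \<Rightarrow> complex) set" where
  "Hol = {f. f holomorphic_on ball 0 1 \<and> (\<forall>z. z \<notin> ball 0 1 \<longrightarrow> f z = 0)}"

definition supnorm :: "nat \<Rightarrow> (complex \<Rightarrow> complex) \<Rightarrow> real" where
  "supnorm p f = (SUP z\<in>cball 0 (1 - 1 / real p). norm (f z))"

text \<open>d(f,g) = sum over p >= 1 of 2^-p min(1, ||f-g||_p); index shifted by one.\<close>
definition hol_dist :: "(complex \<Rightarrow> complex) \<Rightarrow> (complex \<Rightarrow> complex) \<Rightarrow> real" where
  "hol_dist f g = (\<Sum>k. (1/2) ^ Suc k * min 1 (supnorm (Suc k) (\<lambda>z. f z - g z)))"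

definition hol_linear :: "((complex \<Rightarrow> complex) \<Rightarrow> (complex \<Rightarrow> complex)) \<Rightarrow> bool" where
  "hol_linear T \<longleftrightarrow> (\<forall>f\<in>Hol. T f \<in> Hol) \<and>
     (\<forall>f\<in>Hol. \<forall>g\<in>Hol. T (\<lambda>z. f z + g z) = (\<lambda>z. T f z + T g z)) \<and>
     (\<forall>c. \<forall>f\<in>Hol. T (\<lambda>z. c * f z) = (\<lambda>z. c * T f z))"

definition hol_op :: "((complex \<Rightarrow> complex) \<Rightarrow> (complex \<Rightarrow> complex)) \<Rightarrow> bool" where
  "hol_op T \<longleftrightarrow> hol_linear T \<and>
     (\<forall>f\<in>Hol. \<forall>e>0. \<exists>\<delta>>0. \<forall>g\<in>Hol. hol_dist f g < \<delta> \<longrightarrow> hol_dist (T f) (T g) < e)"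

definition hol_isometry :: "((complex \<Rightarrow> complex) \<Rightarrow> (complex \<Rightarrow> complex)) \<Rightarrow> bool" where
  "hol_isometry V \<longleftrightarrow> hol_linear V \<and>
     (\<forall>f\<in>Hol. \<forall>g\<in>Hol. hol_dist (V f) (V g) = hol_dist f g)"

definition hol_invertible :: "((complex \<Rightarrow> complex) \<Rightarrow> (complex \<Rightarrow> complex)) \<Rightarrow> bool" where
  "hol_invertible T \<longleftrightarrow> hol_op T \<and>
     (\<exists>S. hol_op S \<and> (\<forall>f\<in>Hol. S (T f) = f) \<and> (\<forall>f\<in>Hol. T (S f) = f))"

definition hol_similar :: "((complex \<Rightarrow> complex) \<Rightarrow> (complex \<Rightarrow> complex)) \<Rightarrow>
    ((complex \<Rightarrow> complex) \<Rightarrow> (complex \<Rightarrow> complex)) \<Rightarrow> bool" where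
  "hol_similar T V \<longleftrightarrow> (\<exists>U Uinv. hol_op U \<and> hol_op Uinv \<and>
     (\<forall>f\<in>Hol. Uinv (U f) = f) \<and> (\<forall>f\<in>Hol. U (Uinv f) = f) \<and>
     (\<forall>f\<in>Hol. Uinv (T (U f)) = V f))"

definition wco :: "(complex \<Rightarrow> complex) \<Rightarrow> (complex \<Rightarrow> complex) \<Rightarrow>
    (complex \<Rightarrow> complex) \<Rightarrow> (complex \<Rightarrow> complex)" where
  "wco m \<phi> f = (\<lambda>z. if z \<in> ball 0 1 then m z * f (\<phi> z) else 0)"

end

theory Submission
  imports Defs "HOL-Complex_Analysis.Complex_Analysis"
begin

lemma rad_facts0: "0 \<le> 1 - 1 / real (Suc k)" "1 - 1 / real (Suc k) < 1"
  by (auto simp: field_simps)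

lemma rad_facts: "0 \<le> 1 - 1 / real (Suc k)" "1 - 1 / real (Suc k) < 1"
  "cball (0::complex) (1 - 1 / real (Suc k)) \<subseteq> ball 0 1"
  using rad_facts0[of k] by (auto simp only: subset_eq mem_cball mem_ball)

lemma sn_bdd:
  assumes "f holomorphic_on ball 0 1"
  shows "bdd_above ((\<lambda>z. norm (f z)) ` cball 0 (1 - 1 / real (Suc k)))"
proof -
  have "continuous_on (cball 0 (1 - 1 / real (Suc k))) f"
    using holomorphic_on_imp_continuous_on[OF assms] rad_facts(3) continuous_on_subset by blast
  then have "compact ((\<lambda>z. norm (f z)) ` cball 0 (1 - 1 / real (Suc k)))"
    by (intro compact_continuous_image continuous_intros) auto
  then show ?thesis by (intro bounded_imp_bdd_above compact_imp_bounded)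
qed

lemma sn_upper:
  assumes "f holomorphic_on ball 0 1" "norm z \<le> 1 - 1 / real (Suc k)"
  shows "norm (f z) \<le> supnorm (Suc k) f"
  unfolding supnorm_def using sn_bdd[OF assms(1), of k] assms(2)
  by (intro cSUP_upper) auto

lemma sn_nonneg:
  assumes "f holomorphic_on ball 0 1"
  shows "0 \<le> supnorm (Suc k) f"
  using sn_upper[OF assms, of 0 k] rad_facts(1)[of k] norm_ge_zero[of "f 0"] by (metis norm_zero order_trans)

lemma sn_least:
  assumes "\<And>z. norm z \<le> 1 - 1 / real (Suc k) \<Longrightarrow> norm (f z) \<le> M"
  shows "supnorm (Suc k) f \<le> M"
  unfolding supnorm_def using assms rad_facts(1)[of k]
  by (intro cSUP_least) auto

lemma sn_mono:
  assumes "f holomorphic_on ball 0 1" "k \<le> l"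
  shows "supnorm (Suc k) f \<le> supnorm (Suc l) f"
proof (rule sn_least)
  fix z :: complex assume "norm z \<le> 1 - 1 / real (Suc k)"
  moreover have "1 - 1 / real (Suc k) \<le> 1 - 1 / real (Suc l)"
    using assms(2) by (simp add: field_simps)
  ultimately show "norm (f z) \<le> supnorm (Suc l) f"
    by (intro sn_upper[OF assms(1)]) auto
qed

lemma sn_scale:
  assumes "f holomorphic_on ball 0 1"
  shows "supnorm (Suc k) (\<lambda>z. c * f z - 0) = norm c * supnorm (Suc k) f"
proof (cases "c = 0")
  case True
  then show ?thesis unfolding supnorm_def using rad_facts(1)[of k] by auto
next
  case False
  have h: "(\<lambda>z. c * f z) holomorphic_on ball 0 1"
    using assms by (intro holomorphic_intros)
  show ?thesis
  proof (rule antisym)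
    show "supnorm (Suc k) (\<lambda>z. c * f z - 0) \<le> norm c * supnorm (Suc k) f"
      by (rule sn_least) (auto simp: norm_mult intro!: mult_left_mono sn_upper[OF assms])
    have "supnorm (Suc k) f \<le> supnorm (Suc k) (\<lambda>z. c * f z - 0) / norm c"
    proof (rule sn_least)
      fix z :: complex assume z: "norm z \<le> 1 - 1 / real (Suc k)"
      have "norm (c * f z - 0) \<le> supnorm (Suc k) (\<lambda>z. c * f z - 0)"
        using h by (intro sn_upper z) auto
      then show "norm (f z) \<le> supnorm (Suc k) (\<lambda>z. c * f z - 0) / norm c"
        using False by (simp add: field_simps norm_mult)
    qed
    then show "norm c * supnorm (Suc k) f \<le> supnorm (Suc k) (\<lambda>z. c * f z - 0)"
      using False by (simp add: field_simps)
  qed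
qed

lemma sn_triangle:
  assumes "f holomorphic_on ball 0 1" "g holomorphic_on ball 0 1" "h holomorphic_on ball 0 1"
  shows "supnorm (Suc k) (\<lambda>z. f z - h z) \<le> supnorm (Suc k) (\<lambda>z. f z - g z) + supnorm (Suc k) (\<lambda>z. g z - h z)"
proof (rule sn_least)
  fix z :: complex assume z: "norm z \<le> 1 - 1 / real (Suc k)"
  have "norm (f z - h z) \<le> norm (f z - g z) + norm (g z - h z)"
    using norm_triangle_ineq[of "f z - g z" "g z - h z"] by simp
  also have "\<dots> \<le> supnorm (Suc k) (\<lambda>z. f z - g z) + supnorm (Suc k) (\<lambda>z. g z - h z)"
    using assms by (intro add_mono sn_upper[OF _ z] holomorphic_intros)
  finally show "norm (f z - h z) \<le> \<dots>" .
qed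

lemma sn_sym: "supnorm p (\<lambda>z. f z - g z) = supnorm p (\<lambda>z. g z - f z)"
  unfolding supnorm_def by (simp add: norm_minus_commute)

lemma HolD: "f \<in> Hol \<Longrightarrow> f holomorphic_on ball 0 1"
  "f \<in> Hol \<Longrightarrow> z \<notin> ball 0 1 \<Longrightarrow> f z = 0"
  by (auto simp: Hol_def)

lemma ex_rad: assumes "norm (z::complex) < 1" shows "\<exists>k. norm z \<le> 1 - 1 / real (Suc k)"
proof -
  obtain n where "inverse (real (Suc n)) < 1 - norm z"
    using reals_Archimedean[of "1 - norm z"] assms by auto
  then show ?thesis by (intro exI[of _ n]) (simp add: field_simps)
qed

lemma geo_summ: "summable (\<lambda>k. (1/2::real) ^ Suc k)"
  using summable_mult[OF summable_geometric[of "1/2::real"], of "1/2"] by simp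

lemma geo_sum: "(\<Sum>k. (1/2::real) ^ Suc (k + N)) = (1/2)^N"
proof -
  have "(\<Sum>k. (1/2::real) ^ Suc (k + N)) = (\<Sum>k. (1/2)^Suc N * (1/2::real) ^ k)"
    by (simp add: power_add mult_ac)
  also have "\<dots> = (1/2)^Suc N * (\<Sum>k. (1/2::real)^k)"
    by (rule suminf_mult[OF summable_geometric]) simp
  also have "\<dots> = (1/2)^Suc N * 2"
    using suminf_geometric[of "1/2::real"] by simp
  finally show ?thesis by simp
qed

lemma term_bounds:
  assumes "0 \<le> s"
  shows "0 \<le> (1/2::real) ^ Suc k * min 1 s" "(1/2::real) ^ Suc k * min 1 s \<le> (1/2) ^ Suc k"
  using assms by (auto intro: mult_left_le)

lemma sumfun_summable:
  assumes "\<And>k. 0 \<le> s k"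
  shows "summable (\<lambda>k. (1/2::real) ^ Suc k * min 1 (s k))"
  by (rule summable_comparison_test[OF _ geo_summ]) (use assms term_bounds in auto)

lemma dist_summable:
  assumes "f holomorphic_on ball 0 1" "g holomorphic_on ball 0 1"
  shows "summable (\<lambda>k. (1/2::real) ^ Suc k * min 1 (supnorm (Suc k) (\<lambda>z. f z - g z)))"
  using assms by (intro sumfun_summable sn_nonneg holomorphic_intros)

lemma dist_nonneg:
  assumes "f holomorphic_on ball 0 1" "g holomorphic_on ball 0 1"
  shows "0 \<le> hol_dist f g"
  unfolding hol_dist_def using assms
  by (intro suminf_nonneg dist_summable term_bounds sn_nonneg holomorphic_intros)

lemma dist_sym: "hol_dist f g = hol_dist g f"
  unfolding hol_dist_def by (subst sn_sym) simp

lemma dist_self: "hol_dist f f = 0"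
  unfolding hol_dist_def supnorm_def by simp

lemma dist_triangle:
  assumes "f holomorphic_on ball 0 1" "g holomorphic_on ball 0 1" "h holomorphic_on ball 0 1"
  shows "hol_dist f h \<le> hol_dist f g + hol_dist g h"
proof -
  have "hol_dist f h \<le> (\<Sum>k. (1/2::real) ^ Suc k * min 1 (supnorm (Suc k) (\<lambda>z. f z - g z))
        + (1/2::real) ^ Suc k * min 1 (supnorm (Suc k) (\<lambda>z. g z - h z)))"
    unfolding hol_dist_def
  proof (intro suminf_le summable_add dist_summable assms)
    fix k
    have t: "supnorm (Suc k) (\<lambda>z. f z - h z) \<le> supnorm (Suc k) (\<lambda>z. f z - g z) + supnorm (Suc k) (\<lambda>z. g z - h z)"
      using sn_triangle[OF assms] .
    have "0 \<le> supnorm (Suc k) (\<lambda>z. f z - g z)" "0 \<le> supnorm (Suc k) (\<lambda>z. g z - h z)"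
      using assms by (auto intro!: sn_nonneg holomorphic_intros)
    then have "min 1 (supnorm (Suc k) (\<lambda>z. f z - h z)) \<le> min 1 (supnorm (Suc k) (\<lambda>z. f z - g z)) + min 1 (supnorm (Suc k) (\<lambda>z. g z - h z))"
      using t by linarith
    then show "(1/2::real) ^ Suc k * min 1 (supnorm (Suc k) (\<lambda>z. f z - h z)) \<le> (1/2::real) ^ Suc k * min 1 (supnorm (Suc k) (\<lambda>z. f z - g z))
        + (1/2::real) ^ Suc k * min 1 (supnorm (Suc k) (\<lambda>z. g z - h z))"
      by (simp add: distrib_left[symmetric] mult_left_mono)
  qed
  also have "\<dots> = hol_dist f g + hol_dist g h"
    unfolding hol_dist_def using assms by (intro suminf_add[symmetric] dist_summable)
  finally show ?thesis .
qed

lemma dist_zero_eq: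
  assumes "f \<in> Hol" "g \<in> Hol" "hol_dist f g = 0"
  shows "f = g"
proof
  fix z
  show "f z = g z"
  proof (cases "z \<in> ball 0 1")
    case False then show ?thesis using HolD(2) assms by metis
  next
    case True
    then obtain k where k: "norm z \<le> 1 - 1 / real (Suc k)" using ex_rad by auto
    have hf: "f holomorphic_on ball 0 1" "g holomorphic_on ball 0 1" using assms HolD by auto
    have "\<forall>k. (1/2::real) ^ Suc k * min 1 (supnorm (Suc k) (\<lambda>z. f z - g z)) = 0"
    proof -
      have s: "summable (\<lambda>k. (1/2::real) ^ Suc k * min 1 (supnorm (Suc k) (\<lambda>z. f z - g z)))"
        using dist_summable[OF hf] .
      have nn: "\<And>k. 0 \<le> (1/2::real) ^ Suc k * min 1 (supnorm (Suc k) (\<lambda>z. f z - g z))"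
        using hf by (intro term_bounds sn_nonneg holomorphic_intros)
      show ?thesis using suminf_eq_zero_iff[OF s nn] assms(3) unfolding hol_dist_def by blast
    qed
    then have "supnorm (Suc k) (\<lambda>z. f z - g z) \<le> 0"
      by (metis min_def mult_eq_0_iff one_neq_zero power_eq_0_iff zero_neq_numeral divide_eq_0_iff order_refl)
    moreover have "norm (f z - g z) \<le> supnorm (Suc k) (\<lambda>z. f z - g z)"
      using hf k by (intro sn_upper holomorphic_intros)
    ultimately have "norm (f z - g z) \<le> 0" by linarith
    then show ?thesis by simp
  qed
qed

lemma dist_scale:
  assumes "f holomorphic_on ball 0 1" "0 \<le> t"
  shows "hol_dist (\<lambda>z. complex_of_real t * f z) (\<lambda>z. 0) = (\<Sum>k. (1/2::real) ^ Suc k * min 1 (t * supnorm (Suc k) f))"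
  unfolding hol_dist_def using sn_scale[OF assms(1), of _ "complex_of_real t"] assms(2) by simp

lemma seq_unique_aux:
  fixes a b :: "nat \<Rightarrow> real"
  assumes nna: "\<And>k. 0 \<le> a k" and nnb: "\<And>k. 0 \<le> b k"
    and monob: "\<And>k l. k \<le> l \<Longrightarrow> b k \<le> b l"
    and eq: "\<And>t. t > 0 \<Longrightarrow> (\<Sum>k. (1/2::real) ^ Suc k * min 1 (t * a k)) = (\<Sum>k. (1/2::real) ^ Suc k * min 1 (t * b k))"
    and prev: "\<And>j. j < p \<Longrightarrow> a j = b j"
  shows "\<not> a p < b p"
proof
  assume lt: "a p < b p"
  define t where "t = 1 / b p"
  have bp: "b p > 0" using lt nna[of p] by linarith
  then have t: "t > 0" unfolding t_def by simp
  define D where "D k = (1/2::real) ^ Suc k * min 1 (t * b k) - (1/2::real) ^ Suc k * min 1 (t * a k)" for k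
  have sa: "summable (\<lambda>k. (1/2::real) ^ Suc k * min 1 (t * a k))"
    using t nna by (intro sumfun_summable) simp
  have sb: "summable (\<lambda>k. (1/2::real) ^ Suc k * min 1 (t * b k))"
    using t nnb by (intro sumfun_summable) simp
  have sD: "summable D" unfolding D_def using sb sa by (rule summable_diff)
  have "suminf D = 0" unfolding D_def using suminf_diff[OF sb sa] eq[OF t] by simp
  moreover have "0 < suminf D"
  proof (rule suminf_pos2[OF sD])
    fix k
    show "0 \<le> D k"
    proof (cases "k < p")
      case True then show ?thesis using prev[OF True] by (simp add: D_def)
    next
      case False
      then have "b p \<le> b k" by (intro monob) simp
      then have "t * b k \<ge> 1" using t bp unfolding t_def by (simp add: field_simps)
      then show ?thesis unfolding D_def by (simp add: min_def)
    qed
  next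
    have "t * a p < 1" using lt bp unfolding t_def by (simp add: field_simps)
    moreover have "t * b p = 1" using bp unfolding t_def by simp
    ultimately show "0 < D p" unfolding D_def by (simp add: min_def)
  qed
  ultimately show False by simp
qed

lemma seq_unique:
  fixes a b :: "nat \<Rightarrow> real"
  assumes nna: "\<And>k. 0 \<le> a k" and nnb: "\<And>k. 0 \<le> b k"
    and monoa: "\<And>k l. k \<le> l \<Longrightarrow> a k \<le> a l"
    and monob: "\<And>k l. k \<le> l \<Longrightarrow> b k \<le> b l"
    and eq: "\<And>t. t > 0 \<Longrightarrow> (\<Sum>k. (1/2::real) ^ Suc k * min 1 (t * a k)) = (\<Sum>k. (1/2::real) ^ Suc k * min 1 (t * b k))"
  shows "a p = b p"
proof (induction p rule: less_induct)
  case (less p)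
  have "\<not> a p < b p" using seq_unique_aux[of a b p] assms less by blast
  moreover have "\<not> b p < a p" using seq_unique_aux[of b a p] assms less by (metis (no_types))
  ultimately show ?case by linarith
qed

lemma zero_Hol: "(\<lambda>z. 0) \<in> Hol" by (simp add: Hol_def)

lemma scale_Hol: "f \<in> Hol \<Longrightarrow> (\<lambda>z. c * f z) \<in> Hol"
  unfolding Hol_def by (auto intro: holomorphic_intros)

lemma lin_zero: assumes "hol_linear V" shows "V (\<lambda>z. 0) = (\<lambda>z. 0)"
proof -
  have "\<forall>c. \<forall>f\<in>Hol. V (\<lambda>z. c * f z) = (\<lambda>z. c * V f z)" using assms by (simp add: hol_linear_def)
  from bspec[OF spec[OF this, of 0] zero_Hol] have "V (\<lambda>z. 0 * 0) = (\<lambda>z. 0 * V (\<lambda>z. 0) z)" .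
  then show ?thesis by simp
qed

lemma iso_sn:
  assumes V: "hol_isometry V" and f: "f \<in> Hol"
  shows "supnorm (Suc k) (V f) = supnorm (Suc k) f"
proof -
  have lin: "hol_linear V" using V by (simp add: hol_isometry_def)
  have Vf: "V f \<in> Hol" using lin f by (simp add: hol_linear_def)
  have hf: "f holomorphic_on ball 0 1" "V f holomorphic_on ball 0 1" using f Vf HolD by auto
  show ?thesis
  proof (rule seq_unique[where p = k])
    fix t :: real assume t: "t > 0"
    have e1: "V (\<lambda>z. complex_of_real t * f z) = (\<lambda>z. complex_of_real t * V f z)"
    proof -
      have "\<forall>c. \<forall>f\<in>Hol. V (\<lambda>z. c * f z) = (\<lambda>z. c * V f z)" using lin by (simp add: hol_linear_def)
      then show ?thesis using f by blast
    qed
    have iso: "\<forall>f\<in>Hol. \<forall>g\<in>Hol. hol_dist (V f) (V g) = hol_dist f g"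
      using V by (simp add: hol_isometry_def)
    have "hol_dist (\<lambda>z. complex_of_real t * V f z) (\<lambda>z. 0) = hol_dist (V (\<lambda>z. complex_of_real t * f z)) (V (\<lambda>z. 0))"
      by (simp only: e1 lin_zero[OF lin])
    also have "\<dots> = hol_dist (\<lambda>z. complex_of_real t * f z) (\<lambda>z. 0)"
      by (rule iso[rule_format, OF scale_Hol[OF f] zero_Hol])
    finally show "(\<Sum>k. (1/2::real) ^ Suc k * min 1 (t * supnorm (Suc k) (V f))) = (\<Sum>k. (1/2::real) ^ Suc k * min 1 (t * supnorm (Suc k) f))"
      by (simp only: dist_scale[OF hf(1) less_imp_le[OF t]] dist_scale[OF hf(2) less_imp_le[OF t]])
  next
    show "\<And>k. 0 \<le> supnorm (Suc k) (V f)" using hf(2) by (rule sn_nonneg)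
    show "\<And>k. 0 \<le> supnorm (Suc k) f" using hf(1) by (rule sn_nonneg)
    show "\<And>k l. k \<le> l \<Longrightarrow> supnorm (Suc k) (V f) \<le> supnorm (Suc l) (V f)" using hf(2) by (rule sn_mono)
    show "\<And>k l. k \<le> l \<Longrightarrow> supnorm (Suc k) f \<le> supnorm (Suc l) f" using hf(1) by (rule sn_mono)
  qed
qed

lemma compact_in_rad:
  assumes "compact K" "K \<subseteq> ball (0::complex) 1"
  shows "\<exists>k. K \<subseteq> cball 0 (1 - 1 / real (Suc k))"
proof (cases "K = {}")
  case True then show ?thesis by simp
next
  case False
  obtain s where s: "s \<in> K" "\<And>t. t \<in> K \<Longrightarrow> norm t \<le> norm s"
    using continuous_attains_sup[OF assms(1) False, of norm] by (auto intro: continuous_intros)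
  have "norm s < 1" using s(1) assms(2) by auto
  then obtain k where "norm s \<le> 1 - 1 / real (Suc k)" using ex_rad by blast
  then show ?thesis using s(2) by (intro exI[of _ k]) (auto simp: subset_eq intro: order_trans)
qed

lemma series_to_zero:
  fixes s :: "nat \<Rightarrow> nat \<Rightarrow> real"
  assumes nn: "\<And>n k. 0 \<le> s n k" and lim: "\<And>k. (\<lambda>n. s n k) \<longlonglongrightarrow> 0"
  shows "(\<lambda>n. \<Sum>k. (1/2::real) ^ Suc k * min 1 (s n k)) \<longlonglongrightarrow> 0"
proof -
  have l: "\<And>k. (\<lambda>n. (1/2::real) ^ Suc k * min 1 (s n k)) \<longlonglongrightarrow> 0"
  proof -
    fix k
    have "(\<lambda>n. (1/2::real) ^ Suc k * min 1 (s n k)) \<longlonglongrightarrow> (1/2) ^ Suc k * min 1 0"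
      by (intro tendsto_intros lim)
    then show "(\<lambda>n. (1/2::real) ^ Suc k * min 1 (s n k)) \<longlonglongrightarrow> 0" by simp
  qed
  have b: "eventually (\<lambda>(k,n). norm ((1/2::real) ^ Suc k * min 1 (s n k)) \<le> (1/2) ^ Suc k) (at_top \<times>\<^sub>F sequentially)"
    using term_bounds nn by (intro always_eventually) auto
  from tannerys_theorem[OF l b geo_summ] show ?thesis by simp
qed

lemma montel_Hol:
  fixes y :: "nat \<Rightarrow> complex \<Rightarrow> complex"
  assumes y: "\<And>n. y n \<in> Hol" and bd: "\<And>n k. supnorm (Suc k) (y n) \<le> B k"
  shows "\<exists>r h. strict_mono r \<and> h \<in> Hol \<and> (\<lambda>n. hol_dist (y (r n)) h) \<longlonglongrightarrow> 0"
proof -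
  define H where "H = {f. f holomorphic_on ball 0 1 \<and> (\<forall>k. supnorm (Suc k) f \<le> B k)}"
  obtain g r where g: "g holomorphic_on ball 0 1" and r: "strict_mono (r :: nat \<Rightarrow> nat)"
    and ul: "\<And>K. \<lbrakk>compact K; K \<subseteq> ball 0 1\<rbrakk> \<Longrightarrow> uniform_limit K (y \<circ> r) g sequentially"
  proof (rule Montel[of "ball 0 1" H y])
    show "\<And>h. h \<in> H \<Longrightarrow> h holomorphic_on ball 0 1" by (simp add: H_def)
    show "range y \<subseteq> H" using y bd HolD by (auto simp: H_def)
    fix K :: "complex set" assume K: "compact K" "K \<subseteq> ball 0 1"
    then obtain k where k: "K \<subseteq> cball 0 (1 - 1 / real (Suc k))" using compact_in_rad by blast
    show "\<exists>B. \<forall>h\<in>H. \<forall>z\<in>K. norm (h z) \<le> B"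
    proof (intro exI[of _ "B k"] ballI)
      fix h z assume "h \<in> H" "z \<in> K"
      then show "norm (h z) \<le> B k" using k sn_upper[of h z k] by (auto simp: H_def subset_eq intro: order_trans)
    qed
  qed auto
  define h where "h z = (if z \<in> ball 0 1 then g z else 0)" for z
  have hH: "h \<in> Hol" unfolding Hol_def
    using holomorphic_transform[OF g, of h] by (auto simp: h_def)
  have hh: "h holomorphic_on ball 0 1" using hH HolD by auto
  have "(\<lambda>n. hol_dist (y (r n)) h) \<longlonglongrightarrow> 0"
    unfolding hol_dist_def
  proof (rule series_to_zero)
    fix n k show "0 \<le> supnorm (Suc k) (\<lambda>z. y (r n) z - h z)"
      using hh y HolD by (intro sn_nonneg holomorphic_intros) auto
  next
    fix k
    have u: "uniform_limit (cball 0 (1 - 1 / real (Suc k))) (y \<circ> r) g sequentially"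
      using rad_facts(3) by (intro ul) auto
    show "(\<lambda>n. supnorm (Suc k) (\<lambda>z. y (r n) z - h z)) \<longlonglongrightarrow> 0"
    proof (rule LIMSEQ_I)
      fix e :: real assume e: "0 < e"
      from u[unfolded uniform_limit_iff, rule_format, of "e/2"] e
      have "\<forall>\<^sub>F n in sequentially. \<forall>z\<in>cball 0 (1 - 1 / real (Suc k)). dist ((y \<circ> r) n z) (g z) < e/2"
        by simp
      then obtain N where N: "\<And>n z. n \<ge> N \<Longrightarrow> z \<in> cball 0 (1 - 1 / real (Suc k)) \<Longrightarrow> dist (y (r n) z) (g z) < e/2"
        unfolding eventually_sequentially by (metis comp_apply)
      show "\<exists>N. \<forall>n\<ge>N. norm (supnorm (Suc k) (\<lambda>z. y (r n) z - h z) - 0) < e"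
      proof (intro exI[of _ N] allI impI)
        fix n assume n: "n \<ge> N"
        have "supnorm (Suc k) (\<lambda>z. y (r n) z - h z) \<le> e/2"
        proof (rule sn_least)
          fix z :: complex assume z: "norm z \<le> 1 - 1 / real (Suc k)"
          then have "z \<in> ball 0 1" using rad_facts(3)[of k] by auto
          then have "h z = g z" by (simp add: h_def)
          then show "norm (y (r n) z - h z) \<le> e/2" using N[OF n, of z] z by (simp add: dist_norm)
        qed
        moreover have "0 \<le> supnorm (Suc k) (\<lambda>z. y (r n) z - h z)"
          using hh y HolD by (intro sn_nonneg holomorphic_intros) auto
        ultimately show "norm (supnorm (Suc k) (\<lambda>z. y (r n) z - h z) - 0) < e" using e by simp
      qed
    qed
  qed
  then show ?thesis using r hH by blast
qed

lemma iso_surj: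
  assumes V: "hol_isometry V" and g: "g \<in> Hol"
  shows "\<exists>h\<in>Hol. V h = g"
proof -
  have lin: "hol_linear V" using V by (simp add: hol_isometry_def)
  have Vmap: "\<And>f. f \<in> Hol \<Longrightarrow> V f \<in> Hol" using lin by (simp add: hol_linear_def)
  have iso: "\<And>f1 f2. f1 \<in> Hol \<Longrightarrow> f2 \<in> Hol \<Longrightarrow> hol_dist (V f1) (V f2) = hol_dist f1 f2"
    using V by (simp add: hol_isometry_def)
  have holo: "\<And>f. f \<in> Hol \<Longrightarrow> f holomorphic_on ball 0 1" using HolD by auto
  define x where "x n = (V ^^ n) g" for n
  have xS: "x (Suc n) = V (x n)" for n by (simp add: x_def)
  have xH: "x n \<in> Hol" for n by (induction n) (auto simp: x_def g Vmap)
  have xs: "supnorm (Suc k) (x n) = supnorm (Suc k) g" for n k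
    by (induction n) (auto simp: x_def iso_sn[OF V] xH[unfolded x_def])
  have xd: "hol_dist (x n) (x (n + l)) = hol_dist g (x l)" for n l
  proof (induction n)
    case 0 then show ?case by (simp add: x_def)
  next
    case (Suc n)
    have "hol_dist (x (Suc n)) (x (Suc n + l)) = hol_dist (V (x n)) (V (x (n + l)))"
      by (simp add: xS)
    also have "\<dots> = hol_dist (x n) (x (n + l))" using iso xH by blast
    finally show ?case using Suc by simp
  qed
  have step1: "\<exists>l>0. hol_dist g (x l) < e" if e: "e > 0" for e
  proof -
    obtain r h where r: "strict_mono r" and hH: "h \<in> Hol" and lim: "(\<lambda>n. hol_dist (x (r n)) h) \<longlonglongrightarrow> 0"
      using montel_Hol[of x "\<lambda>k. supnorm (Suc k) g"] xH xs by auto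
    obtain N where N: "\<And>n. n \<ge> N \<Longrightarrow> norm (hol_dist (x (r n)) h - 0) < e/2"
      using LIMSEQ_D[OF lim, of "e/2"] e by auto
    have lt: "r N < r (Suc N)" using r by (simp add: strict_mono_def)
    define l where "l = r (Suc N) - r N"
    have l: "r (Suc N) = r N + l" "l > 0" using lt by (auto simp: l_def)
    have "hol_dist (x (r N)) (x (r (Suc N))) \<le> hol_dist (x (r N)) h + hol_dist h (x (r (Suc N)))"
      using xH hH holo by (intro dist_triangle) auto
    also have "\<dots> < e" using N[of N] N[of "Suc N"] by (simp add: dist_sym[of h])
    finally show ?thesis using xd[of "r N" l] l by auto
  qed
  have "\<forall>j. \<exists>l>0. hol_dist g (x l) < inverse (real (Suc j))"
    using step1 by auto
  then obtain L where L: "\<And>j. L j > 0" "\<And>j. hol_dist g (x (L j)) < inverse (real (Suc j))"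
    by metis
  define z where "z j = x (L j - 1)" for j
  have zV: "V (z j) = x (L j)" for j using L(1)[of j] xS[of "L j - 1"] by (simp add: z_def)
  obtain r h where r: "strict_mono r" and hH: "h \<in> Hol" and lim: "(\<lambda>n. hol_dist (z (r n)) h) \<longlonglongrightarrow> 0"
    using montel_Hol[of z "\<lambda>k. supnorm (Suc k) g"] xH xs unfolding z_def by auto
  have zH: "z j \<in> Hol" for j by (simp add: z_def xH)
  have bound: "hol_dist (V h) g \<le> hol_dist (z (r n)) h + inverse (real (Suc n))" for n
  proof -
    have "hol_dist (V h) g \<le> hol_dist (V h) (V (z (r n))) + hol_dist (V (z (r n))) g"
      using Vmap hH zH g holo by (intro dist_triangle) auto
    also have "\<dots> = hol_dist (z (r n)) h + hol_dist g (x (L (r n)))"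
      using iso[OF hH zH] zV by (simp add: dist_sym)
    also have "hol_dist g (x (L (r n))) \<le> inverse (real (Suc n))"
    proof -
      have "n \<le> r n" using r by (rule seq_suble)
      then have "inverse (real (Suc (r n))) \<le> inverse (real (Suc n))"
        by (simp add: le_imp_inverse_le)
      then show ?thesis using L(2)[of "r n"] by linarith
    qed
    finally show ?thesis by simp
  qed
  have "(\<lambda>n. hol_dist (z (r n)) h + inverse (real (Suc n))) \<longlonglongrightarrow> 0 + 0"
    by (intro tendsto_add lim LIMSEQ_inverse_real_of_nat)
  then have "hol_dist (V h) g \<le> 0"
    using bound by (intro LIMSEQ_le_const[of _ 0]) auto
  moreover have "0 \<le> hol_dist (V h) g" using Vmap hH g holo by (intro dist_nonneg) auto
  ultimately have "hol_dist (V h) g = 0" by simp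
  then have "V h = g" using dist_zero_eq Vmap hH g by blast
  then show ?thesis using hH by blast
qed

definition hcont :: "((complex \<Rightarrow> complex) \<Rightarrow> (complex \<Rightarrow> complex)) \<Rightarrow> bool" where
  "hcont A \<longleftrightarrow> (\<forall>f\<in>Hol. \<forall>e>0. \<exists>\<delta>>0. \<forall>g\<in>Hol. hol_dist f g < \<delta> \<longrightarrow> hol_dist (A f) (A g) < e)"

lemma hol_op_iff: "hol_op T \<longleftrightarrow> hol_linear T \<and> hcont T"
  by (simp add: hol_op_def hcont_def)

lemma hcont_comp:
  assumes "hcont A" "hcont B" "\<And>f. f \<in> Hol \<Longrightarrow> B f \<in> Hol"
  shows "hcont (\<lambda>f. A (B f))"
  unfolding hcont_def
proof (intro ballI allI impI)
  fix f e assume f: "f \<in> Hol" and e: "(e::real) > 0"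
  obtain d1 where d1: "d1 > 0" "\<And>g. g \<in> Hol \<Longrightarrow> hol_dist (B f) g < d1 \<Longrightarrow> hol_dist (A (B f)) (A g) < e"
    using assms(1) assms(3)[OF f] e unfolding hcont_def by blast
  obtain d2 where d2: "d2 > 0" "\<And>g. g \<in> Hol \<Longrightarrow> hol_dist f g < d2 \<Longrightarrow> hol_dist (B f) (B g) < d1"
    using assms(2) f d1(1) unfolding hcont_def by blast
  show "\<exists>\<delta>>0. \<forall>g\<in>Hol. hol_dist f g < \<delta> \<longrightarrow> hol_dist (A (B f)) (A (B g)) < e"
    using d2 d1(2) assms(3) by blast
qed

lemma hcont_iso:
  assumes "\<And>f g. f \<in> Hol \<Longrightarrow> g \<in> Hol \<Longrightarrow> hol_dist (A f) (A g) = hol_dist f g"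
  shows "hcont A"
  unfolding hcont_def using assms by (metis)

lemma hcont_cong:
  assumes "hcont A" "\<And>f. f \<in> Hol \<Longrightarrow> A f = B f"
  shows "hcont B"
  using assms unfolding hcont_def by metis

lemma add_Hol: "f \<in> Hol \<Longrightarrow> g \<in> Hol \<Longrightarrow> (\<lambda>z. f z + g z) \<in> Hol"
  unfolding Hol_def by (auto intro: holomorphic_intros)

lemma sim_inv:
  assumes U: "hol_op U" and Ui: "hol_op Ui" and UiU: "\<And>f. f \<in> Hol \<Longrightarrow> Ui (U f) = f"
    and UUi: "\<And>f. f \<in> Hol \<Longrightarrow> U (Ui f) = f" and V: "hol_isometry V"
    and lt: "hol_linear T" and rep: "\<And>f. f \<in> Hol \<Longrightarrow> T f = U (V (Ui f))"
  shows "hol_invertible T"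
proof -
  have lin: "hol_linear V" using V by (simp add: hol_isometry_def)
  have Vmap: "\<And>f. f \<in> Hol \<Longrightarrow> V f \<in> Hol" using lin by (simp add: hol_linear_def)
  have Umap: "\<And>f. f \<in> Hol \<Longrightarrow> U f \<in> Hol" using U by (simp add: hol_op_def hol_linear_def)
  have Uimap: "\<And>f. f \<in> Hol \<Longrightarrow> Ui f \<in> Hol" using Ui by (simp add: hol_op_def hol_linear_def)
  have iso: "\<And>f1 f2. f1 \<in> Hol \<Longrightarrow> f2 \<in> Hol \<Longrightarrow> hol_dist (V f1) (V f2) = hol_dist f1 f2"
    using V by (simp add: hol_isometry_def)
  have Vinj: "\<And>a b. a \<in> Hol \<Longrightarrow> b \<in> Hol \<Longrightarrow> V a = V b \<Longrightarrow> a = b"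
    using iso dist_zero_eq dist_self by metis
  define W where "W y = (SOME h. h \<in> Hol \<and> V h = y)" for y
  have W: "W y \<in> Hol \<and> V (W y) = y" if "y \<in> Hol" for y
    using iso_surj[OF V that] unfolding W_def by (metis (mono_tags, lifting) someI_ex)
  have WV: "W (V a) = a" if "a \<in> Hol" for a using W[OF Vmap[OF that]] Vinj that by blast
  have hU: "hcont U" "hcont Ui" using U Ui by (auto simp: hol_op_iff)
  have hV: "hcont V" using iso by (intro hcont_iso)
  have hW: "hcont W"
  proof (rule hcont_iso)
    fix f g assume "f \<in> Hol" "g \<in> Hol"
    then show "hol_dist (W f) (W g) = hol_dist f g" using iso W by metis
  qed
  have hT: "hcont T"
  proof (rule hcont_cong[of "\<lambda>f. U (V (Ui f))"])
    show "hcont (\<lambda>f. U (V (Ui f)))"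
      by (intro hcont_comp[OF hU(1)] hcont_comp[OF hV] hU(2)) (auto intro: Vmap Uimap)
  qed (simp add: rep)
  define S where "S f = U (W (Ui f))" for f
  have hS: "hcont S" unfolding S_def
    by (intro hcont_comp[OF hU(1)] hcont_comp[OF hW] hU(2)) (use W Uimap in blast)+
  have Wadd: "W (\<lambda>z. a z + b z) = (\<lambda>z. W a z + W b z)" if "a \<in> Hol" "b \<in> Hol" for a b
  proof (rule Vinj)
    show "W (\<lambda>z. a z + b z) \<in> Hol" using W add_Hol that by blast
    show "(\<lambda>z. W a z + W b z) \<in> Hol" using W add_Hol that by blast
    have "V (\<lambda>z. W a z + W b z) = (\<lambda>z. V (W a) z + V (W b) z)"
      using lin W that unfolding hol_linear_def by blast
    also have "\<dots> = (\<lambda>z. a z + b z)" using W that by simp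
    finally show "V (W (\<lambda>z. a z + b z)) = V (\<lambda>z. W a z + W b z)" using W add_Hol that by simp
  qed
  have Wmul: "W (\<lambda>z. c * a z) = (\<lambda>z. c * W a z)" if "a \<in> Hol" for a c
  proof (rule Vinj)
    show "W (\<lambda>z. c * a z) \<in> Hol" using W scale_Hol that by blast
    show "(\<lambda>z. c * W a z) \<in> Hol" using W scale_Hol that by blast
    have "V (\<lambda>z. c * W a z) = (\<lambda>z. c * V (W a) z)"
      using lin W that unfolding hol_linear_def by blast
    also have "\<dots> = (\<lambda>z. c * a z)" using W that by simp
    finally show "V (W (\<lambda>z. c * a z)) = V (\<lambda>z. c * W a z)" using W scale_Hol that by simp
  qed
  have Ulin: "\<forall>f\<in>Hol. \<forall>g\<in>Hol. U (\<lambda>z. f z + g z) = (\<lambda>z. U f z + U g z)"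
    "\<forall>c. \<forall>f\<in>Hol. U (\<lambda>z. c * f z) = (\<lambda>z. c * U f z)"
    using U by (simp_all add: hol_op_def hol_linear_def)
  have Uilin: "\<forall>f\<in>Hol. \<forall>g\<in>Hol. Ui (\<lambda>z. f z + g z) = (\<lambda>z. Ui f z + Ui g z)"
    "\<forall>c. \<forall>f\<in>Hol. Ui (\<lambda>z. c * f z) = (\<lambda>z. c * Ui f z)"
    using Ui by (simp_all add: hol_op_def hol_linear_def)
  have Slin: "hol_linear S"
    unfolding hol_linear_def
  proof (intro conjI ballI allI)
    fix f assume f: "f \<in> Hol"
    show "S f \<in> Hol" unfolding S_def using f W Uimap Umap by blast
  next
    fix f g assume f: "f \<in> Hol" and g: "g \<in> Hol"
    have "S (\<lambda>z. f z + g z) = U (W (\<lambda>z. Ui f z + Ui g z))" unfolding S_def using Uilin f g by simp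
    also have "\<dots> = U (\<lambda>z. W (Ui f) z + W (Ui g) z)" using Wadd Uimap f g by simp
    also have "\<dots> = (\<lambda>z. S f z + S g z)" unfolding S_def using Ulin W Uimap f g by simp
    finally show "S (\<lambda>z. f z + g z) = (\<lambda>z. S f z + S g z)" .
  next
    fix c f assume f: "f \<in> Hol"
    have "S (\<lambda>z. c * f z) = U (W (\<lambda>z. c * Ui f z))" unfolding S_def using Uilin f by simp
    also have "\<dots> = U (\<lambda>z. c * W (Ui f) z)" using Wmul Uimap f by simp
    also have "\<dots> = (\<lambda>z. c * S f z)" unfolding S_def using Ulin W Uimap f by simp
    finally show "S (\<lambda>z. c * f z) = (\<lambda>z. c * S f z)" .
  qed
  have ST: "S (T f) = f" if "f \<in> Hol" for f
    unfolding S_def rep[OF that] using that UiU Vmap Uimap WV UUi by simp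
  have TS: "T (S f) = f" if "f \<in> Hol" for f
  proof -
    have Sf: "U (W (Ui f)) \<in> Hol" using Slin that unfolding S_def by (simp add: hol_linear_def)
    have "T (S f) = U (V (Ui (U (W (Ui f)))))" unfolding S_def by (rule rep[OF Sf])
    also have "\<dots> = f" using that UiU W Uimap UUi by simp
    finally show ?thesis .
  qed
  show ?thesis unfolding hol_invertible_def hol_op_iff
    using lt hT Slin hS ST TS by blast
qed

lemma wco_Hol:
  assumes "\<phi> holomorphic_on ball 0 1" "\<phi> ` ball 0 1 \<subseteq> ball 0 1" "m holomorphic_on ball 0 1" "f \<in> Hol"
  shows "wco m \<phi> f \<in> Hol"
proof -
  have "(f \<circ> \<phi>) holomorphic_on ball 0 1"
    using holomorphic_on_compose_gen[OF assms(1) HolD(1)[OF assms(4)] assms(2)] .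
  then have "(\<lambda>z. m z * f (\<phi> z)) holomorphic_on ball 0 1"
    using assms(3) by (simp add: o_def holomorphic_intros)
  then have "wco m \<phi> f holomorphic_on ball 0 1"
    by (rule holomorphic_transform) (simp add: wco_def)
  then show ?thesis unfolding Hol_def by (simp add: wco_def)
qed

lemma wco_linear:
  assumes "\<phi> holomorphic_on ball 0 1" "\<phi> ` ball 0 1 \<subseteq> ball 0 1" "m holomorphic_on ball 0 1"
  shows "hol_linear (wco m \<phi>)"
  unfolding hol_linear_def
proof (intro conjI ballI allI)
  fix f assume "f \<in> Hol" then show "wco m \<phi> f \<in> Hol" by (rule wco_Hol[OF assms])
next
  fix f g :: "complex \<Rightarrow> complex"
  show "wco m \<phi> (\<lambda>z. f z + g z) = (\<lambda>z. wco m \<phi> f z + wco m \<phi> g z)"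
    by (simp add: wco_def fun_eq_iff distrib_left)
next
  fix c and f :: "complex \<Rightarrow> complex"
  show "wco m \<phi> (\<lambda>z. c * f z) = (\<lambda>z. c * wco m \<phi> f z)"
    by (simp add: wco_def fun_eq_iff mult_ac)
qed

theorem lemma3p3:
  fixes m \<phi> :: "complex \<Rightarrow> complex"
  assumes "\<phi> holomorphic_on ball 0 1"
    and "\<phi> ` ball 0 1 \<subseteq> ball 0 1"
    and "m holomorphic_on ball 0 1"
    and "\<exists>V. hol_isometry V \<and> hol_similar (wco m \<phi>) V"
  shows "hol_invertible (wco m \<phi>)"
proof -
  obtain V where V: "hol_isometry V" and sim: "hol_similar (wco m \<phi>) V" using assms(4) by blast
  obtain U Ui where U: "hol_op U" and Ui: "hol_op Ui" and s1: "\<forall>f\<in>Hol. Ui (U f) = f"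
    and s2: "\<forall>f\<in>Hol. U (Ui f) = f" and s3: "\<forall>f\<in>Hol. Ui (wco m \<phi> (U f)) = V f"
    using sim unfolding hol_similar_def by blast
  have UiU: "\<And>f. f \<in> Hol \<Longrightarrow> Ui (U f) = f" using s1 by blast
  have UUi: "\<And>f. f \<in> Hol \<Longrightarrow> U (Ui f) = f" using s2 by blast
  have c: "\<And>f. f \<in> Hol \<Longrightarrow> Ui (wco m \<phi> (U f)) = V f" using s3 by blast
  have Umap: "\<And>f. f \<in> Hol \<Longrightarrow> U f \<in> Hol" using U by (simp add: hol_op_def hol_linear_def)
  have Uimap: "\<And>f. f \<in> Hol \<Longrightarrow> Ui f \<in> Hol" using Ui by (simp add: hol_op_def hol_linear_def)
  have rep: "wco m \<phi> f = U (V (Ui f))" if f: "f \<in> Hol" for f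
  proof -
    have h: "Ui f \<in> Hol" using Uimap f .
    have "wco m \<phi> f = wco m \<phi> (U (Ui f))" by (simp only: UUi[OF f])
    also have "\<dots> = U (Ui (wco m \<phi> (U (Ui f))))"
      by (rule UUi[OF wco_Hol[OF assms(1-3) Umap[OF h]], symmetric])
    also have "\<dots> = U (V (Ui f))" by (rule arg_cong[where f=U, OF c[OF h]])
    finally show ?thesis .
  qed
  show ?thesis
  proof (rule sim_inv[where T="wco m \<phi>" and U=U and Ui=Ui and V=V])
    show "hol_op U" by (rule U)
    show "hol_op Ui" by (rule Ui)
    show "\<And>f. f \<in> Hol \<Longrightarrow> Ui (U f) = f" by (rule UiU)
    show "\<And>f. f \<in> Hol \<Longrightarrow> U (Ui f) = f" by (rule UUi)
    show "hol_isometry V" by (rule V)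
    show "hol_linear (wco m \<phi>)" by (rule wco_linear[OF assms(1-3)])
    show "\<And>f. f \<in> Hol \<Longrightarrow> wco m \<phi> f = U (V (Ui f))" by (rule rep)
  qed
qed

end
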